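(* Let $D\ge3$ and let $\mathcal G$ be a connected closed $(D+1)$-colored graph with colors $0,1,\dots,D$ and $2p$ vertices. Let $\mathcal B_{(1)},\dots,\mathcal B_{(|\rho|)}$ be the connected components of the subgraph of $\mathcal G$ formed by all vertices and all lines of colors $1,\dots,D$ (each is a connected closed $D$-colored graph), and for $i=1,\dots,D$ let $|\mathcal F_{0i}|$ be the number of faces of $\mathcal G$ of colors $\{0,i\}$. Then $$(D-1)|\rho| - \frac{2}{(D-2)!}\sum_{\rho}\omega(\mathcal B_{(\rho)}) - (D-1)p + \sum_{i=1}^D|\mathcal F_{0i}| \;=\; D - \frac{2}{(D-1)!}\,\omega(\mathcal G).$$ Consequently, in the tensor model with action $S(T,\bar T)=t_1\mathrm{Tr}_{\mathcal B_1}(T,\bar T)+\sum_{\mathcal B}t_{\mathcal B}N^{-\frac{2}{(D-2)!}\omega(\mathcal B)}\mathrm{Tr}_{\mathcal B}(T,\bar T)$ and weight $e^{-N^{D-1}S}$, the Feynman amplitude of $\mathcal G$ equals $\frac{\prod_\rho t_{\mathcal B_{(\rho)}}}{t_1^{p}}\,N^{D-\frac{2}{(D-1)!}\omega(\mathcal G)}$.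
   Context: A closed $n$-colored graph is a finite graph (multiple lines allowed) whose vertex set is partitioned into white and black vertices of equal number, every line joining a white to a black vertex, whose lines are each assigned one of $n$ colors, and such that every vertex has degree $n$ with the $n$ lines incident to it having pairwise distinct colors. A face of colors $\{i,j\}$ is a connected component of the subgraph formed by all vertices and all lines of colors $i,j$. For a cyclic permutation $\tau$ of the color set, the jacket $\mathcal J_\tau$ is the ribbon graph with all vertices and lines of the graph whose faces are the faces of colors $\{\tau^q(c),\tau^{q+1}(c)\}$ for all $q$; $\tau$ and $\tau^{-1}$ give the same jacket; its genus $g$ is defined by $V-E+F=2-2g$. The degree $\omega$ of a graph is the sum of genera of all its distinct jackets. For a $D$-colored graph $\mathcal B$, $\mathrm{Tr}_{\mathcal B}(T,\bar T)=\sum\prod_{i=1}^D\prod_{\text{lines } (v,\bar v)\text{ of color } i}\delta_{n^v_i\bar n^{\bar v}_i}\prod_{v}T_{\vec n^v}\prod_{\bar v}\bar T_{\bar{\vec n}^{\bar v}}$, with one complex rank-$D$ tensor $T$ (indices in $\{1,\dots,N\}$) per white vertex and one $\bar T$ per black vertex; $\mathcal B_1$ is the unique $D$-colored graph with two vertices. In the Feynman expansion each Wick contraction (a color-$0$ line) contributes $\frac{1}{t_1N^{D-1}}\prod_i\delta_{n_i\bar n_i}$ and each bubble $\mathcal B_{(\rho)}$ contributes $t_{\mathcal B_{(\rho)}}N^{D-1-\frac{2}{(D-2)!}\omega(\mathcal B_{(\rho)})}$ times its index contractions; each face of colors $\{0,i\}$ gives a free index sum, i.e. a factor $N$. *)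

theory Defs
  imports Complex_Main
begin

text \<open>
A closed colored graph with 2p vertices is given by
p white vertices Inl 0, ..., Inl (p-1), p black vertices Inr 0, ..., Inr (p-1), and, for each
color c, a bijection sigma c of {..<p}: the unique line of color c at the white vertex Inl w
joins it to the black vertex Inr (sigma c w).  The line of color c at Inl w is identified with
the pair (c, w); multiple lines are thus allowed.
\<close>

definition cg_verts :: "nat \<Rightarrow> (nat + nat) set" where
  "cg_verts p = Inl ` {..<p} \<union> Inr ` {..<p}"

definition closed_colored_graph :: "nat set \<Rightarrow> nat \<Rightarrow> (nat \<Rightarrow> nat \<Rightarrow> nat) \<Rightarrow> bool" where
  "closed_colored_graph C p \<sigma> \<longleftrightarrow> finite C \<and> (\<forall>c\<in>C. bij_betw (\<sigma> c) {..<p} {..<p})"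

definition cg_adj :: "(nat \<Rightarrow> nat \<Rightarrow> nat) \<Rightarrow> nat set \<Rightarrow> nat + nat \<Rightarrow> nat + nat \<Rightarrow> bool" where
  "cg_adj \<sigma> C x y \<longleftrightarrow> (\<exists>c\<in>C. \<exists>w. (x = Inl w \<and> y = Inr (\<sigma> c w)) \<or> (y = Inl w \<and> x = Inr (\<sigma> c w)))"

definition cg_comps :: "(nat \<Rightarrow> nat \<Rightarrow> nat) \<Rightarrow> nat set \<Rightarrow> (nat + nat) set \<Rightarrow> (nat + nat) set set" where
  "cg_comps \<sigma> C S = S // {(x, y). x \<in> S \<and> y \<in> S \<and>
       (\<lambda>u v. u \<in> S \<and> v \<in> S \<and> cg_adj \<sigma> C u v)\<^sup>*\<^sup>* x y}"

definition cg_lines :: "nat set \<Rightarrow> (nat + nat) set \<Rightarrow> (nat \<times> nat) set" where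
  "cg_lines C S = {(c, w). c \<in> C \<and> Inl w \<in> S}"

definition num_faces :: "(nat \<Rightarrow> nat \<Rightarrow> nat) \<Rightarrow> (nat + nat) set \<Rightarrow> nat \<Rightarrow> nat \<Rightarrow> nat" where
  "num_faces \<sigma> S i j = card (cg_comps \<sigma> {i, j} S)"

definition cyclic_perm :: "nat set \<Rightarrow> (nat \<Rightarrow> nat) \<Rightarrow> bool" where
  "cyclic_perm C \<tau> \<longleftrightarrow> bij_betw \<tau> C C \<and> (\<forall>c\<in>C. \<forall>d\<in>C. \<exists>k. (\<tau> ^^ k) c = d)"

text \<open>The jacket of \<tau>, represented by the set of color pairs
  {\<tau>^q(c), \<tau>^(q+1)(c)} of its faces (c any color; we take c = Min C).
  \<tau> and its inverse give the same set, so distinct jackets are distinct sets.\<close>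
definition jacket_pairs :: "nat set \<Rightarrow> (nat \<Rightarrow> nat) \<Rightarrow> nat set set" where
  "jacket_pairs C \<tau> = {{(\<tau> ^^ q) (Min C), (\<tau> ^^ Suc q) (Min C)} | q. True}"

definition jackets :: "nat set \<Rightarrow> nat set set set" where
  "jackets C = {jacket_pairs C \<tau> | \<tau>. cyclic_perm C \<tau>}"

text \<open>Genus of a jacket J of the colored graph on S with colors C: V - E + F = 2 - 2g.\<close>
definition jacket_genus :: "(nat \<Rightarrow> nat \<Rightarrow> nat) \<Rightarrow> nat set \<Rightarrow> (nat + nat) set \<Rightarrow> nat set set \<Rightarrow> real" where
  "jacket_genus \<sigma> C S J =
     (2 - real (card S) + real (card (cg_lines C S))
        - (\<Sum>e\<in>J. real (card (cg_comps \<sigma> e S)))) / 2"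

definition cg_degree :: "(nat \<Rightarrow> nat \<Rightarrow> nat) \<Rightarrow> nat set \<Rightarrow> (nat + nat) set \<Rightarrow> real" where
  "cg_degree \<sigma> C S = (\<Sum>J\<in>jackets C. jacket_genus \<sigma> C S J)"

definition bubbles :: "nat \<Rightarrow> nat \<Rightarrow> (nat \<Rightarrow> nat \<Rightarrow> nat) \<Rightarrow> (nat + nat) set set" where
  "bubbles D p \<sigma> = cg_comps \<sigma> {1..D} (cg_verts p)"

definition cg_connected :: "nat set \<Rightarrow> nat \<Rightarrow> (nat \<Rightarrow> nat \<Rightarrow> nat) \<Rightarrow> bool" where
  "cg_connected C p \<sigma> \<longleftrightarrow> card (cg_comps \<sigma> C (cg_verts p)) = 1"

text \<open>Feynman amplitude of G by the rules: each color-0 line gives 1/(t1 N^(D-1)),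
  each bubble B gives t_B N^(D-1-2/(D-2)! omega(B)), each face of colors {0,i} gives N.\<close>
definition feynman_amplitude ::
  "nat \<Rightarrow> nat \<Rightarrow> (nat \<Rightarrow> nat \<Rightarrow> nat) \<Rightarrow> real \<Rightarrow> ((nat + nat) set \<Rightarrow> real) \<Rightarrow> real \<Rightarrow> real" where
  "feynman_amplitude D p \<sigma> t1 tB N =
     (1 / (t1 * N ^ (D - 1))) ^ p
     * (\<Prod>B\<in>bubbles D p \<sigma>. tB B * N powr (real D - 1 - 2 / fact (D - 2) * cg_degree \<sigma> {1..D} B))
     * N ^ (\<Sum>i=1..D. num_faces \<sigma> (cg_verts p) 0 i)"

end

theory Submission
  imports Defs "HOL-Combinatorics.Cycles" "HOL-Combinatorics.Multiset_Permutations"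
begin


definition CP :: "nat set \<Rightarrow> (nat \<Rightarrow> nat) set" where
  "CP C = {\<tau>. cyclic_perm C \<tau> \<and> (\<forall>x. x \<notin> C \<longrightarrow> \<tau> x = x)}"

definition Ej :: "nat set \<Rightarrow> (nat \<Rightarrow> nat) \<Rightarrow> nat set set" where
  "Ej C \<tau> = (\<lambda>c. {c, \<tau> c}) ` C"

lemma funpow_in: "bij_betw \<tau> C C \<Longrightarrow> c \<in> C \<Longrightarrow> (\<tau> ^^ k) c \<in> C"
  by (induction k) (auto dest: bij_betwE)

lemma jp_eq:
  assumes "cyclic_perm C \<tau>" "finite C" "C \<noteq> {}"
  shows "jacket_pairs C \<tau> = Ej C \<tau>"
proof -
  have m: "Min C \<in> C" using assms by simp
  have b: "bij_betw \<tau> C C" using assms(1) by (simp add: cyclic_perm_def)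
  show ?thesis
  proof
    show "jacket_pairs C \<tau> \<subseteq> Ej C \<tau>"
      unfolding jacket_pairs_def Ej_def using funpow_in[OF b m] by auto
  next
    show "Ej C \<tau> \<subseteq> jacket_pairs C \<tau>"
    proof
      fix e assume "e \<in> Ej C \<tau>"
      then obtain c where c: "c \<in> C" "e = {c, \<tau> c}" by (auto simp: Ej_def)
      then obtain k where "(\<tau> ^^ k) (Min C) = c" using assms(1) m by (auto simp: cyclic_perm_def)
      then have "e = {(\<tau> ^^ k) (Min C), (\<tau> ^^ Suc k) (Min C)}" using c by simp
      then show "e \<in> jacket_pairs C \<tau>" unfolding jacket_pairs_def by blast
    qed
  qed
qed

lemma jackets_eq:
  assumes "finite C" "C \<noteq> {}"
  shows "jackets C = Ej C ` CP C"
proof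
  show "Ej C ` CP C \<subseteq> jackets C"
    unfolding jackets_def CP_def using jp_eq[OF _ assms] by blast
next
  show "jackets C \<subseteq> Ej C ` CP C"
  proof
    fix J assume "J \<in> jackets C"
    then obtain \<tau> where t: "cyclic_perm C \<tau>" "J = jacket_pairs C \<tau>" by (auto simp: jackets_def)
    define \<tau>' where "\<tau>' = (\<lambda>x. if x \<in> C then \<tau> x else x)"
    have b: "bij_betw \<tau> C C" using t by (simp add: cyclic_perm_def)
    have b': "bij_betw \<tau>' C C" using b by (rule bij_betw_cong[THEN iffD1, rotated]) (simp add: \<tau>'_def)
    have pw: "(\<tau>' ^^ k) c = (\<tau> ^^ k) c" if "c \<in> C" for k c
      using that by (induction k) (auto simp: \<tau>'_def funpow_in[OF b])
    have "cyclic_perm C \<tau>'" using t b' pw by (auto simp: cyclic_perm_def)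
    then have "\<tau>' \<in> CP C" by (auto simp: CP_def \<tau>'_def)
    moreover have "J = Ej C \<tau>'" using t jp_eq[OF t(1) assms] by (auto simp: Ej_def \<tau>'_def)
    ultimately show "J \<in> Ej C ` CP C" by blast
  qed
qed

lemma CP_permutes: "\<tau> \<in> CP C \<Longrightarrow> \<tau> permutes C"
  by (rule bij_imp_permutes) (auto simp: CP_def cyclic_perm_def)

lemma CP_trans: "\<tau> \<in> CP C \<Longrightarrow> c \<in> C \<Longrightarrow> d \<in> C \<Longrightarrow> \<exists>k. (\<tau> ^^ k) c = d"
  by (auto simp: CP_def cyclic_perm_def)

lemma two_cycle:
  assumes "\<tau> \<in> CP C" "c \<in> C" "\<tau> (\<tau> c) = c"
  shows "C \<subseteq> {c, \<tau> c}"
proof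
  fix d assume "d \<in> C"
  then obtain k where k: "(\<tau> ^^ k) c = d" using CP_trans assms by blast
  have "(\<tau> ^^ k) c \<in> {c, \<tau> c}" for k
    by (induction k) (use assms in auto)
  then show "d \<in> {c, \<tau> c}" using k by blast
qed

lemma card3_no2:
  assumes "\<tau> \<in> CP C" "c \<in> C" "card C \<ge> 3" "finite C"
  shows "\<tau> (\<tau> c) \<noteq> c" "\<tau> c \<noteq> c"
proof -
  show "\<tau> (\<tau> c) \<noteq> c"
  proof
    assume "\<tau> (\<tau> c) = c"
    then have "C \<subseteq> {c, \<tau> c}" using two_cycle assms by blast
    then have "card C \<le> card {c, \<tau> c}" by (intro card_mono) auto
    also have "\<dots> \<le> 2" by (simp add: card_insert_if)
    finally show False using assms by simp
  qed
  then show "\<tau> c \<noteq> c" by auto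
qed

lemma inj_edge:
  assumes "\<tau> \<in> CP C" "card C \<ge> 3" "finite C"
  shows "inj_on (\<lambda>c. {c, \<tau> c}) C"
proof
  fix c d assume cd: "c \<in> C" "d \<in> C" "{c, \<tau> c} = {d, \<tau> d}"
  show "c = d"
  proof (rule ccontr)
    assume "c \<noteq> d"
    then have "c = \<tau> d" "\<tau> c = d" using cd(3) by (auto simp: doubleton_eq_iff)
    then show False using card3_no2(1)[OF assms(1) cd(2) assms(2,3)] by simp
  qed
qed

lemma funpow_inv_cancel:
  assumes "\<tau> permutes C"
  shows "(inv \<tau> ^^ k) ((\<tau> ^^ k) x) = x"
proof (induction k arbitrary: x)
  case 0 then show ?case by simp
next
  case (Suc k)
  have "(inv \<tau> ^^ Suc k) ((\<tau> ^^ Suc k) x) = (inv \<tau> ^^ k) (inv \<tau> (\<tau> ((\<tau> ^^ k) x)))"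
  proof -
    have a: "(\<tau> ^^ Suc k) x = \<tau> ((\<tau> ^^ k) x)" by simp
    have b: "(inv \<tau> ^^ Suc k) y = (inv \<tau> ^^ k) (inv \<tau> y)" for y
      by (simp only: funpow_Suc_right comp_apply)
    show ?thesis by (simp only: a b)
  qed
  also have "\<dots> = x" using Suc.IH by (simp add: permutes_inverses[OF assms])
  finally show ?case .
qed

lemma inv_CP:
  assumes "\<tau> \<in> CP C"
  shows "inv \<tau> \<in> CP C"
proof -
  have p: "\<tau> permutes C" using CP_permutes assms .
  have pi: "inv \<tau> permutes C" using permutes_inv[OF p] .
  have "\<exists>k. (inv \<tau> ^^ k) c = d" if cd: "c \<in> C" "d \<in> C" for c d
  proof -
    obtain k where "(\<tau> ^^ k) d = c" using CP_trans[OF assms cd(2,1)] by blast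
    then show ?thesis using funpow_inv_cancel[OF p, of k d] by metis
  qed
  then show ?thesis using pi permutes_imp_bij[OF pi] permutes_not_in[OF pi]
    by (auto simp: CP_def cyclic_perm_def)
qed

lemma Ej_inv:
  assumes "\<tau> \<in> CP C"
  shows "Ej C (inv \<tau>) = Ej C \<tau>"
proof -
  have p: "\<tau> permutes C" using CP_permutes assms .
  have pi: "inv \<tau> permutes C" using permutes_inv[OF p] .
  show ?thesis
  proof
    show "Ej C (inv \<tau>) \<subseteq> Ej C \<tau>"
    proof
      fix e assume "e \<in> Ej C (inv \<tau>)"
      then obtain c where c: "c \<in> C" "e = {c, inv \<tau> c}" by (auto simp: Ej_def)
      define d where "d = inv \<tau> c"
      have "d \<in> C" using c permutes_in_image[OF pi] by (simp add: d_def)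
      moreover have "e = {d, \<tau> d}" using c by (auto simp: d_def permutes_inverses[OF p])
      ultimately show "e \<in> Ej C \<tau>" by (auto simp: Ej_def)
    qed
  next
    show "Ej C \<tau> \<subseteq> Ej C (inv \<tau>)"
    proof
      fix e assume "e \<in> Ej C \<tau>"
      then obtain c where c: "c \<in> C" "e = {c, \<tau> c}" by (auto simp: Ej_def)
      define d where "d = \<tau> c"
      have "d \<in> C" using c permutes_in_image[OF p] by (simp add: d_def)
      moreover have "e = {d, inv \<tau> d}" using c by (auto simp: d_def permutes_inverses[OF p])
      ultimately show "e \<in> Ej C (inv \<tau>)" by (auto simp: Ej_def)
    qed
  qed
qed

lemma Ej_unique:
  assumes t: "\<tau> \<in> CP C" and t': "\<tau>' \<in> CP C" and c3: "card C \<ge> 3" and fin: "finite C"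
    and eq: "Ej C \<tau>' = Ej C \<tau>"
  shows "\<tau>' = \<tau> \<or> \<tau>' = inv \<tau>"
proof -
  have p: "\<tau> permutes C" using CP_permutes t .
  have p': "\<tau>' permutes C" using CP_permutes t' .
  have pi: "inv \<tau> permutes C" using permutes_inv[OF p] .
  have step1: "\<tau>' x = \<tau> x \<or> \<tau>' x = inv \<tau> x" if x: "x \<in> C" for x
  proof -
    have "{x, \<tau>' x} \<in> Ej C \<tau>" using eq x by (auto simp: Ej_def)
    then obtain c where c: "c \<in> C" "{x, \<tau>' x} = {c, \<tau> c}" by (auto simp: Ej_def)
    then show ?thesis
      by (auto simp: doubleton_eq_iff permutes_inverses[OF p])
  qed
  show ?thesis
  proof (cases "\<exists>x0\<in>C. \<tau>' x0 = \<tau> x0")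
    case True
    then obtain x0 where x0: "x0 \<in> C" "\<tau>' x0 = \<tau> x0" by blast
    have b: "bij_betw \<tau> C C" using permutes_imp_bij[OF p] .
    have all: "\<tau>' ((\<tau> ^^ k) x0) = \<tau> ((\<tau> ^^ k) x0)" for k
    proof (induction k)
      case 0 then show ?case using x0 by simp
    next
      case (Suc k)
      define y where "y = (\<tau> ^^ k) x0"
      have y: "y \<in> C" using funpow_in[OF b x0(1)] by (simp add: y_def)
      have z: "\<tau> y \<in> C" using y permutes_in_image[OF p] by simp
      have "\<tau>' (\<tau> y) = \<tau> (\<tau> y) \<or> \<tau>' (\<tau> y) = inv \<tau> (\<tau> y)" using step1[OF z] .
      moreover have "\<tau>' (\<tau>' y) \<noteq> y" using card3_no2(1)[OF t' y c3 fin] .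
      ultimately have "\<tau>' (\<tau> y) = \<tau> (\<tau> y)"
        using Suc.IH by (auto simp: y_def[symmetric] permutes_inverses[OF p])
      then show ?case by (simp add: y_def)
    qed
    have "\<tau>' x = \<tau> x" for x
    proof (cases "x \<in> C")
      case True
      then obtain k where "(\<tau> ^^ k) x0 = x" using CP_trans[OF t x0(1)] by blast
      then show ?thesis using all by metis
    next
      case False then show ?thesis using permutes_not_in[OF p] permutes_not_in[OF p'] by simp
    qed
    then show ?thesis by auto
  next
    case False
    have "\<tau>' x = inv \<tau> x" for x
    proof (cases "x \<in> C")
      case True
      then show ?thesis using step1[OF True] False by auto
    next
      case False then show ?thesis using permutes_not_in[OF pi] permutes_not_in[OF p'] by simp
    qed
    then show ?thesis by auto
  qed
qed

lemma fiber2: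
  assumes t: "\<tau> \<in> CP C" and c3: "card C \<ge> 3" and fin: "finite C"
  shows "card {\<tau>' \<in> CP C. Ej C \<tau>' = Ej C \<tau>} = 2"
proof -
  have p: "\<tau> permutes C" using CP_permutes t .
  have "{\<tau>' \<in> CP C. Ej C \<tau>' = Ej C \<tau>} = {\<tau>, inv \<tau>}"
    using Ej_unique[OF t _ c3 fin] inv_CP[OF t] Ej_inv[OF t] t by auto
  moreover have "\<tau> \<noteq> inv \<tau>"
  proof
    assume h: "\<tau> = inv \<tau>"
    have "C \<noteq> {}" using c3 by auto
    then obtain c where c: "c \<in> C" by blast
    have "\<tau> (\<tau> c) = c" using permutes_inverses(1)[OF p, of c] h by metis
    then show False using card3_no2(1)[OF t c c3 fin] by simp
  qed
  ultimately show ?thesis by simp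
qed




definition Lm :: "nat set \<Rightarrow> nat \<Rightarrow> nat list set" where
  "Lm C m = {xs. distinct xs \<and> set xs = C \<and> hd xs = m}"

lemma Lm_eq:
  assumes "finite C" "m \<in> C"
  shows "Lm C m = (Cons m) ` permutations_of_set (C - {m})"
proof
  show "Lm C m \<subseteq> (Cons m) ` permutations_of_set (C - {m})"
  proof
    fix xs assume xs: "xs \<in> Lm C m"
    then have ne: "xs \<noteq> []" using assms unfolding Lm_def by auto
    have e: "xs = m # tl xs" using xs ne unfolding Lm_def by (cases xs) auto
    have d0: "distinct xs" and st0: "set xs = C" using xs unfolding Lm_def by simp_all
    have d: "distinct (m # tl xs)" using d0 e by simp
    have st: "set (m # tl xs) = C" using st0 e by simp
    have "distinct (tl xs)" "m \<notin> set (tl xs)" using d by auto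
    then have "set (tl xs) = C - {m}" using st by auto
    then have "tl xs \<in> permutations_of_set (C - {m})" using \<open>distinct (tl xs)\<close>
      unfolding permutations_of_set_def by blast
    then show "xs \<in> (Cons m) ` permutations_of_set (C - {m})" using e by blast
  qed
next
  show "(Cons m) ` permutations_of_set (C - {m}) \<subseteq> Lm C m"
  proof
    fix xs assume "xs \<in> (Cons m) ` permutations_of_set (C - {m})"
    then obtain ys where ys: "xs = m # ys" "set ys = C - {m}" "distinct ys"
      unfolding permutations_of_set_def by blast
    then show "xs \<in> Lm C m" using assms unfolding Lm_def by auto
  qed
qed
lemma Lm_card:
  assumes "finite C" "m \<in> C"
  shows "card (Lm C m) = fact (card C - 1)"
proof -
  have "card (Lm C m) = card (permutations_of_set (C - {m}))"
    unfolding Lm_eq[OF assms] by (simp add: card_image)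
  also have "\<dots> = fact (card C - 1)" using assms by simp
  finally show ?thesis .
qed

lemma cyc_pow_nth:
  assumes "distinct xs" "k < length xs"
  shows "(cycle_of_list xs ^^ k) (xs ! 0) = xs ! k"
proof -
  have l: "0 < length xs" using assms by linarith
  have "(cycle_of_list xs ^^ k) (xs ! 0) = map (cycle_of_list xs ^^ k) xs ! 0" using l by simp
  also have "\<dots> = rotate k xs ! 0" using cyclic_rotation[OF assms(1)] by simp
  also have "\<dots> = xs ! k" using l assms by (simp add: nth_rotate)
  finally show ?thesis .
qed

lemma cyc_pow_nth':
  assumes "distinct xs" "i < length xs"
  shows "(cycle_of_list xs ^^ k) (xs ! i) = xs ! ((k + i) mod length xs)"
proof -
  have "(cycle_of_list xs ^^ k) (xs ! i) = map (cycle_of_list xs ^^ k) xs ! i" using assms by simp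
  also have "\<dots> = rotate k xs ! i" using cyclic_rotation[OF assms(1)] by simp
  also have "\<dots> = xs ! ((k + i) mod length xs)" using assms by (simp add: nth_rotate)
  finally show ?thesis .
qed

lemma cyc_in_CP:
  assumes "xs \<in> Lm C m"
  shows "cycle_of_list xs \<in> CP C"
proof -
  have d: "distinct xs" and s: "set xs = C" using assms by (auto simp: Lm_def)
  have p: "cycle_of_list xs permutes C" using cycle_permutes[of xs] s by simp
  have tr: "\<exists>k. (cycle_of_list xs ^^ k) c = e" if ce: "c \<in> C" "e \<in> C" for c e
  proof -
    obtain i where i: "i < length xs" "xs ! i = c" using ce s by (auto simp: in_set_conv_nth)
    obtain j where j: "j < length xs" "xs ! j = e" using ce s by (auto simp: in_set_conv_nth)
    have "(cycle_of_list xs ^^ (j + length xs - i)) c = xs ! ((j + length xs - i + i) mod length xs)"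
      using cyc_pow_nth'[OF d i(1)] i by simp
    also have "\<dots> = e" using i j by simp
    finally show ?thesis by blast
  qed
  show ?thesis using p tr permutes_imp_bij[OF p] permutes_not_in[OF p]
    by (auto simp: CP_def cyclic_perm_def)
qed

lemma card_CP:
  assumes fin: "finite C" and m: "m \<in> C"
  shows "card (CP C) = fact (card C - 1)"
proof -
  have "bij_betw cycle_of_list (Lm C m) (CP C)"
  proof (rule bij_betw_imageI)
    show "inj_on cycle_of_list (Lm C m)"
    proof
      fix xs ys assume xs: "xs \<in> Lm C m" and ys: "ys \<in> Lm C m" and eq: "cycle_of_list xs = cycle_of_list ys"
      have dx: "distinct xs" "set xs = C" "hd xs = m" using xs by (auto simp: Lm_def)
      have dy: "distinct ys" "set ys = C" "hd ys = m" using ys by (auto simp: Lm_def)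
      have lx: "length xs = card C" using distinct_card[OF dx(1)] dx(2) by simp
      have ly: "length ys = card C" using distinct_card[OF dy(1)] dy(2) by simp
      have cpos: "card C > 0" using m fin by (auto simp: card_gt_0_iff)
      have x0: "xs ! 0 = m" using dx lx cpos hd_conv_nth[of xs] by (cases xs) auto
      have y0: "ys ! 0 = m" using dy ly cpos hd_conv_nth[of ys] by (cases ys) auto
      show "xs = ys"
      proof (rule nth_equalityI)
        show "length xs = length ys" using lx ly by simp
      next
        fix k assume "k < length xs"
        then show "xs ! k = ys ! k"
          using cyc_pow_nth[OF dx(1), of k] cyc_pow_nth[OF dy(1), of k] lx ly x0 y0 eq by simp
      qed
    qed
  next
    show "cycle_of_list ` Lm C m = CP C"
    proof
      show "cycle_of_list ` Lm C m \<subseteq> CP C" using cyc_in_CP by blast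
    next
      show "CP C \<subseteq> cycle_of_list ` Lm C m"
      proof
        fix \<tau> assume t: "\<tau> \<in> CP C"
        have p: "\<tau> permutes C" using CP_permutes t .
        have pp: "permutation \<tau>" using permutes_imp_permutation[OF fin p] .
        define xs where "xs = support \<tau> m"
        have d: "distinct xs" using cycle_of_permutation[OF pp] by (simp add: xs_def)
        have "set xs = range (\<lambda>i. (\<tau> ^^ i) m)" using support_set[OF pp] by (simp add: xs_def)
        also have "\<dots> = C"
        proof
          show "range (\<lambda>i. (\<tau> ^^ i) m) \<subseteq> C" using funpow_in[OF permutes_imp_bij[OF p] m] by auto
          show "C \<subseteq> range (\<lambda>i. (\<tau> ^^ i) m)"
          proof
            fix c assume "c \<in> C"
            then obtain k where "(\<tau> ^^ k) m = c" using CP_trans[OF t m] by blast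
            then show "c \<in> range (\<lambda>i. (\<tau> ^^ i) m)" by (metis rangeI)
          qed
        qed
        finally have s: "set xs = C" .
        have lp: "least_power \<tau> m > 0" using least_power_of_permutation(2)[OF pp] .
        have h: "hd xs = m" using lp by (simp add: xs_def hd_map)
        have "cycle_of_list xs = \<tau>"
        proof
          fix b show "cycle_of_list xs b = \<tau> b"
          proof (cases "b \<in> C")
            case True
            then show ?thesis using cycle_restrict[OF pp, of b m] s by (simp add: xs_def)
          next
            case False
            then show ?thesis using id_outside_supp[of b xs] s permutes_not_in[OF p] by simp
          qed
        qed
        moreover have "xs \<in> Lm C m" using d s h by (simp add: Lm_def)
        ultimately show "\<tau> \<in> cycle_of_list ` Lm C m" by blast
      qed
    qed
  qed
  then have "card (CP C) = card (Lm C m)" by (simp add: bij_betw_same_card)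
  then show ?thesis using Lm_card[OF fin m] by simp
qed

lemma finite_CP:
  assumes fin: "finite C" and m: "m \<in> C"
  shows "finite (CP C)"
proof (rule ccontr)
  assume "infinite (CP C)"
  then have "card (CP C) = 0" by simp
  then show False using card_CP[OF assms] by simp
qed




lemma conj_pow:
  fixes \<pi> \<tau> :: "nat \<Rightarrow> nat"
  assumes inv: "\<And>x. \<pi> (\<pi> x) = x"
  shows "((\<pi> \<circ> \<tau> \<circ> \<pi>) ^^ k) x = \<pi> ((\<tau> ^^ k) (\<pi> x))"
  by (induction k arbitrary: x) (auto simp: inv)

lemma conj_CP:
  assumes t: "\<tau> \<in> CP C" and d: "d \<in> C" and d': "d' \<in> C"
  shows "(transpose d d' \<circ> \<tau> \<circ> transpose d d') \<in> CP C"
proof -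
  let ?\<pi> = "transpose d d'"
  have pp: "?\<pi> permutes C" using permutes_swap_id[OF d d'] .
  have p: "\<tau> permutes C" using CP_permutes t .
  have q: "?\<pi> \<circ> \<tau> \<circ> ?\<pi> permutes C" using permutes_compose[OF permutes_compose[OF pp p] pp] by (simp add: comp_assoc)
  have inv: "\<And>x. ?\<pi> (?\<pi> x) = x" by simp
  have tr: "\<exists>k. ((?\<pi> \<circ> \<tau> \<circ> ?\<pi>) ^^ k) c = e" if ce: "c \<in> C" "e \<in> C" for c e
  proof -
    have "?\<pi> c \<in> C" "?\<pi> e \<in> C" using ce permutes_in_image[OF pp] by auto
    then obtain k where "(\<tau> ^^ k) (?\<pi> c) = ?\<pi> e" using CP_trans[OF t] by blast
    then have "((?\<pi> \<circ> \<tau> \<circ> ?\<pi>) ^^ k) c = e" using conj_pow[where \<pi>="?\<pi>" and \<tau>=\<tau> and k=k and x=c, OF inv] by simp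
    then show ?thesis by blast
  qed
  show ?thesis using q tr permutes_imp_bij[OF q] permutes_not_in[OF q]
    by (auto simp: CP_def cyclic_perm_def)
qed

lemma A_le:
  assumes fin: "finite C" and c: "c \<in> C" and d: "d \<in> C" and d': "d' \<in> C" and cd: "c \<noteq> d" "c \<noteq> d'"
  shows "card {\<tau> \<in> CP C. \<tau> c = d} \<le> card {\<tau> \<in> CP C. \<tau> c = d'}"
proof (rule card_inj_on_le)
  let ?\<pi> = "transpose d d'"
  let ?f = "\<lambda>\<tau>. ?\<pi> \<circ> \<tau> \<circ> ?\<pi>"
  show "inj_on ?f {\<tau> \<in> CP C. \<tau> c = d}"
  proof
    fix x y assume "?f x = ?f y"
    have "x z = y z" for z
    proof -
      have "x z = ?\<pi> (?f x (?\<pi> z))" by simp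
      also have "\<dots> = ?\<pi> (?f y (?\<pi> z))" using \<open>?f x = ?f y\<close> by simp
      also have "\<dots> = y z" by simp
      finally show ?thesis .
    qed
    then show "x = y" by blast
  qed
  show "?f ` {\<tau> \<in> CP C. \<tau> c = d} \<subseteq> {\<tau> \<in> CP C. \<tau> c = d'}"
  proof
    fix \<sigma> assume "\<sigma> \<in> ?f ` {\<tau> \<in> CP C. \<tau> c = d}"
    then obtain \<tau> where t: "\<tau> \<in> CP C" "\<tau> c = d" "\<sigma> = ?f \<tau>" by blast
    have "\<sigma> c = d'" using t cd by simp
    moreover have "\<sigma> \<in> CP C" using conj_CP[OF t(1) d d'] t(3) by simp
    ultimately show "\<sigma> \<in> {\<tau> \<in> CP C. \<tau> c = d'}" by blast
  qed
  show "finite {\<tau> \<in> CP C. \<tau> c = d'}" using finite_CP[OF fin c] by simp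
qed

lemma A_card:
  assumes fin: "finite C" and c: "c \<in> C" and d: "d \<in> C" and cd: "c \<noteq> d"
  shows "card {\<tau> \<in> CP C. \<tau> c = d} = fact (card C - 2)"
proof -
  have eq: "card {\<tau> \<in> CP C. \<tau> c = d'} = card {\<tau> \<in> CP C. \<tau> c = d}" if "d' \<in> C - {c}" for d'
  proof -
    have t: "d' \<in> C" "c \<noteq> d'" using that by auto
    show ?thesis using A_le[OF fin c d t(1) cd t(2)] A_le[OF fin c t(1) d t(2) cd] by simp
  qed
  have fCP: "finite (CP C)" using finite_CP[OF fin c] .
  have img: "(\<lambda>\<tau>. \<tau> c) ` CP C \<subseteq> C - {c}"
  proof
    fix x assume "x \<in> (\<lambda>\<tau>. \<tau> c) ` CP C"
    then obtain \<tau> where t: "\<tau> \<in> CP C" "x = \<tau> c" by blast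
    have "C \<noteq> {d}" "C \<noteq> {c}" using c d cd by auto
    have "\<tau> c \<noteq> c"
    proof
      assume h: "\<tau> c = c"
      obtain k where "(\<tau> ^^ k) c = d" using CP_trans[OF t(1) c d] by blast
      moreover have "(\<tau> ^^ k) c = c" for k by (induction k) (use h in auto)
      ultimately show False using cd by simp
    qed
    moreover have "\<tau> c \<in> C" using c permutes_in_image[OF CP_permutes[OF t(1)]] by simp
    ultimately show "x \<in> C - {c}" using t by simp
  qed
  have "card (CP C) = (\<Sum>d'\<in>C - {c}. card {\<tau> \<in> CP C. \<tau> c = d'})"
    using sum.group[OF fCP _ img, of "\<lambda>_. (1::nat)"] fin by simp
  also have "\<dots> = (\<Sum>d'\<in>C - {c}. card {\<tau> \<in> CP C. \<tau> c = d})" using eq by simp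
  also have "\<dots> = (card C - 1) * card {\<tau> \<in> CP C. \<tau> c = d}" using c fin by simp
  finally have "fact (card C - 1) = (card C - 1) * card {\<tau> \<in> CP C. \<tau> c = d}"
    using card_CP[OF fin c] by simp
  moreover have "card C \<ge> 2"
  proof -
    have "{c, d} \<subseteq> C" using c d by simp
    then have "card {c, d} \<le> card C" using fin by (rule card_mono[rotated])
    then show ?thesis using cd by simp
  qed
  moreover have "fact (card C - 1) = (card C - 1) * (fact (card C - 2) :: nat)"
  proof -
    obtain k where k: "card C = Suc (Suc k)" using \<open>card C \<ge> 2\<close> by (metis add_2_eq_Suc le_Suc_ex)
    show ?thesis unfolding k by simp
  qed
  ultimately show ?thesis using \<open>card C \<ge> 2\<close> by simp
qed




lemma sum_jackets_half:
  fixes g :: "nat set set \<Rightarrow> real"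
  assumes fin: "finite C" and c3: "card C \<ge> 3"
  shows "(\<Sum>J\<in>jackets C. g J) = (\<Sum>\<tau>\<in>CP C. g (Ej C \<tau>)) / 2"
proof -
  have ne: "C \<noteq> {}" using c3 by auto
  then obtain m where m: "m \<in> C" by blast
  have fCP: "finite (CP C)" using finite_CP[OF fin m] .
  have "(\<Sum>\<tau>\<in>CP C. g (Ej C \<tau>)) = (\<Sum>J\<in>Ej C ` CP C. \<Sum>\<tau>\<in>{\<tau>\<in>CP C. Ej C \<tau> = J}. g (Ej C \<tau>))"
    using sum.image_gen[OF fCP, of "\<lambda>\<tau>. g (Ej C \<tau>)" "Ej C"] by simp
  also have "\<dots> = (\<Sum>J\<in>Ej C ` CP C. 2 * g J)"
  proof (rule sum.cong[OF refl])
    fix J assume "J \<in> Ej C ` CP C"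
    then obtain \<tau> where t: "\<tau> \<in> CP C" "J = Ej C \<tau>" by blast
    have "(\<Sum>\<tau>'\<in>{\<tau>'\<in>CP C. Ej C \<tau>' = J}. g (Ej C \<tau>')) = (\<Sum>\<tau>'\<in>{\<tau>'\<in>CP C. Ej C \<tau>' = J}. g J)"
      by (rule sum.cong) auto
    also have "\<dots> = 2 * g J" using fiber2[OF t(1) c3 fin] t(2) by simp
    finally show "(\<Sum>\<tau>'\<in>{\<tau>'\<in>CP C. Ej C \<tau>' = J}. g (Ej C \<tau>')) = 2 * g J" .
  qed
  finally show ?thesis using jackets_eq[OF fin ne] by (simp add: sum_distrib_left[symmetric])
qed

lemma jacket_sum:
  fixes F :: "nat set \<Rightarrow> real" and K :: real
  assumes fin: "finite C" and c3: "card C \<ge> 3"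
  shows "(\<Sum>J\<in>jackets C. K - (\<Sum>e\<in>J. F e))
     = fact (card C - 1) / 2 * K - fact (card C - 2) / 2 * (\<Sum>c\<in>C. \<Sum>d\<in>C - {c}. F {c, d})"
proof -
  have ne: "C \<noteq> {}" using c3 by auto
  then obtain m where m: "m \<in> C" by blast
  have fCP: "finite (CP C)" using finite_CP[OF fin m] .
  have e1: "(\<Sum>e\<in>Ej C \<tau>. F e) = (\<Sum>c\<in>C. F {c, \<tau> c})" if t: "\<tau> \<in> CP C" for \<tau>
    unfolding Ej_def using sum.reindex[OF inj_edge[OF t c3 fin], of F] by simp
  have e2: "(\<Sum>\<tau>\<in>CP C. F {c, \<tau> c}) = fact (card C - 2) * (\<Sum>d\<in>C - {c}. F {c, d})" if c: "c \<in> C" for c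
  proof -
    have img: "(\<lambda>\<tau>. \<tau> c) ` CP C \<subseteq> C - {c}"
    proof
      fix x assume "x \<in> (\<lambda>\<tau>. \<tau> c) ` CP C"
      then obtain \<tau> where t: "\<tau> \<in> CP C" "x = \<tau> c" by blast
      have "\<tau> c \<noteq> c" using card3_no2(2)[OF t(1) c c3 fin] .
      moreover have "\<tau> c \<in> C" using c permutes_in_image[OF CP_permutes[OF t(1)]] by simp
      ultimately show "x \<in> C - {c}" using t by simp
    qed
    have "(\<Sum>\<tau>\<in>CP C. F {c, \<tau> c}) = (\<Sum>d\<in>C - {c}. \<Sum>\<tau>\<in>{\<tau>\<in>CP C. \<tau> c = d}. F {c, \<tau> c})"
      using sum.group[OF fCP _ img, of "\<lambda>\<tau>. F {c, \<tau> c}"] fin by simp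
    also have "\<dots> = (\<Sum>d\<in>C - {c}. fact (card C - 2) * F {c, d})"
    proof (rule sum.cong[OF refl])
      fix d assume d: "d \<in> C - {c}"
      have "(\<Sum>\<tau>\<in>{\<tau>\<in>CP C. \<tau> c = d}. F {c, \<tau> c}) = (\<Sum>\<tau>\<in>{\<tau>\<in>CP C. \<tau> c = d}. F {c, d})"
        by (rule sum.cong) auto
      also have "\<dots> = fact (card C - 2) * F {c, d}"
        using A_card[OF fin c, of d] d by simp
      finally show "(\<Sum>\<tau>\<in>{\<tau>\<in>CP C. \<tau> c = d}. F {c, \<tau> c}) = fact (card C - 2) * F {c, d}" .
    qed
    also have "\<dots> = fact (card C - 2) * (\<Sum>d\<in>C - {c}. F {c, d})" by (simp add: sum_distrib_left)
    finally show ?thesis .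
  qed
  have "(\<Sum>J\<in>jackets C. K - (\<Sum>e\<in>J. F e)) = (\<Sum>\<tau>\<in>CP C. K - (\<Sum>e\<in>Ej C \<tau>. F e)) / 2"
    by (rule sum_jackets_half[OF fin c3])
  also have "(\<Sum>\<tau>\<in>CP C. K - (\<Sum>e\<in>Ej C \<tau>. F e)) = (\<Sum>\<tau>\<in>CP C. K - (\<Sum>c\<in>C. F {c, \<tau> c}))"
    using e1 by simp
  also have "\<dots> = real (card (CP C)) * K - (\<Sum>\<tau>\<in>CP C. \<Sum>c\<in>C. F {c, \<tau> c})"
    by (simp add: sum_subtractf)
  also have "(\<Sum>\<tau>\<in>CP C. \<Sum>c\<in>C. F {c, \<tau> c}) = (\<Sum>c\<in>C. \<Sum>\<tau>\<in>CP C. F {c, \<tau> c})"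
    by (rule sum.swap)
  also have "\<dots> = (\<Sum>c\<in>C. fact (card C - 2) * (\<Sum>d\<in>C - {c}. F {c, d}))"
    using e2 by simp
  also have "\<dots> = fact (card C - 2) * (\<Sum>c\<in>C. \<Sum>d\<in>C - {c}. F {c, d})"
    by (simp add: sum_distrib_left)
  finally show ?thesis using card_CP[OF fin m] by (simp add: diff_divide_distrib)
qed

definition Phi :: "(nat \<Rightarrow> nat \<Rightarrow> nat) \<Rightarrow> nat set \<Rightarrow> (nat + nat) set \<Rightarrow> real" where
  "Phi \<sigma> C S = (\<Sum>c\<in>C. \<Sum>d\<in>C - {c}. real (card (cg_comps \<sigma> {c, d} S)))"

lemma degree_formula:
  assumes fin: "finite C" and c3: "card C \<ge> 3"
  shows "cg_degree \<sigma> C S = fact (card C - 1) / 4 * (2 - real (card S) + real (card (cg_lines C S)))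
     - fact (card C - 2) / 4 * Phi \<sigma> C S"
proof -
  let ?K = "2 - real (card S) + real (card (cg_lines C S))"
  have "cg_degree \<sigma> C S = (\<Sum>J\<in>jackets C. ?K - (\<Sum>e\<in>J. real (card (cg_comps \<sigma> e S)))) / 2"
    unfolding cg_degree_def jacket_genus_def by (simp add: sum_divide_distrib)
  also have "\<dots> = (fact (card C - 1) / 2 * ?K - fact (card C - 2) / 2 * Phi \<sigma> C S) / 2"
    unfolding jacket_sum[OF fin c3] Phi_def ..
  finally show ?thesis by simp
qed




definition crel :: "(nat \<Rightarrow> nat \<Rightarrow> nat) \<Rightarrow> nat set \<Rightarrow> (nat + nat) set \<Rightarrow> ((nat + nat) \<times> (nat + nat)) set" where
  "crel \<sigma> C S = {(x, y). x \<in> S \<and> y \<in> S \<and>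
       (\<lambda>u v. u \<in> S \<and> v \<in> S \<and> cg_adj \<sigma> C u v)\<^sup>*\<^sup>* x y}"

lemma comps_def': "cg_comps \<sigma> C S = S // crel \<sigma> C S"
  unfolding cg_comps_def crel_def ..

lemma adj_sym: "cg_adj \<sigma> C x y \<Longrightarrow> cg_adj \<sigma> C y x"
  unfolding cg_adj_def by blast

lemma adj_mono: "cg_adj \<sigma> C' x y \<Longrightarrow> C' \<subseteq> C \<Longrightarrow> cg_adj \<sigma> C x y"
  unfolding cg_adj_def by blast

lemma rt_sym:
  assumes "(\<lambda>u v. u \<in> S \<and> v \<in> S \<and> cg_adj \<sigma> C u v)\<^sup>*\<^sup>* x y"
  shows "(\<lambda>u v. u \<in> S \<and> v \<in> S \<and> cg_adj \<sigma> C u v)\<^sup>*\<^sup>* y x"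
  using assms
proof (induction rule: rtranclp_induct)
  case base then show ?case by simp
next
  case (step y z)
  then show ?case using adj_sym
    by (metis (mono_tags, lifting) converse_rtranclp_into_rtranclp)
qed

lemma equiv_crel: "equiv S (crel \<sigma> C S)"
proof (rule equivI)
  show "refl_on S (crel \<sigma> C S)" unfolding crel_def refl_on_def by auto
  show "sym (crel \<sigma> C S)" unfolding crel_def sym_def using rt_sym by blast
  show "trans (crel \<sigma> C S)" unfolding crel_def trans_def
    by (auto intro: rtranclp_trans)
  show "crel \<sigma> C S \<subseteq> S \<times> S" unfolding crel_def by auto
qed

lemma comps_facts:
  assumes "finite S"
  shows "finite (cg_comps \<sigma> C S)" "\<And>B. B \<in> cg_comps \<sigma> C S \<Longrightarrow> B \<subseteq> S"
    "\<And>B. B \<in> cg_comps \<sigma> C S \<Longrightarrow> B \<noteq> {}" "\<And>B. B \<in> cg_comps \<sigma> C S \<Longrightarrow> finite B"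
    "\<Union>(cg_comps \<sigma> C S) = S"
    "\<And>A B. A \<in> cg_comps \<sigma> C S \<Longrightarrow> B \<in> cg_comps \<sigma> C S \<Longrightarrow> A \<noteq> B \<Longrightarrow> A \<inter> B = {}"
proof -
  have e: "equiv S (crel \<sigma> C S)" by (rule equiv_crel)
  have sub: "crel \<sigma> C S \<subseteq> S \<times> S" unfolding crel_def by auto
  show "finite (cg_comps \<sigma> C S)" unfolding comps_def' using finite_quotient[OF assms sub] .
  show s: "\<And>B. B \<in> cg_comps \<sigma> C S \<Longrightarrow> B \<subseteq> S" unfolding comps_def' using in_quotient_imp_subset[OF e] .
  show "\<And>B. B \<in> cg_comps \<sigma> C S \<Longrightarrow> B \<noteq> {}" unfolding comps_def' using in_quotient_imp_non_empty[OF e] .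
  show "\<And>B. B \<in> cg_comps \<sigma> C S \<Longrightarrow> finite B" using s assms finite_subset by blast
  show "\<Union>(cg_comps \<sigma> C S) = S" unfolding comps_def' using Union_quotient[OF e] .
  show "\<And>A B. A \<in> cg_comps \<sigma> C S \<Longrightarrow> B \<in> cg_comps \<sigma> C S \<Longrightarrow> A \<noteq> B \<Longrightarrow> A \<inter> B = {}"
    unfolding comps_def' using quotient_disj[OF e] by blast
qed

lemma sum_partition:
  fixes h :: "nat + nat \<Rightarrow> 'b::comm_monoid_add"
  assumes "finite S"
  shows "(\<Sum>B\<in>cg_comps \<sigma> C S. \<Sum>x\<in>B. h x) = (\<Sum>x\<in>S. h x)"
proof -
  have "(\<Sum>x\<in>\<Union>(cg_comps \<sigma> C S). h x) = (\<Sum>B\<in>cg_comps \<sigma> C S. \<Sum>x\<in>B. h x)"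
    using sum.Union_disjoint[of "cg_comps \<sigma> C S" h] comps_facts[OF assms] by (simp add: o_def)
  then show ?thesis using comps_facts(5)[OF assms] by simp
qed

lemma class_eq:
  assumes sub: "C' \<subseteq> C" and B: "B \<in> cg_comps \<sigma> C S" and x: "x \<in> B"
  shows "crel \<sigma> C' S `` {x} = crel \<sigma> C' B `` {x}"
proof -
  have e: "equiv S (crel \<sigma> C S)" by (rule equiv_crel)
  have BS: "B \<subseteq> S" using B unfolding comps_def' using in_quotient_imp_subset[OF e] by blast
  obtain b where b: "B = crel \<sigma> C S `` {b}" "b \<in> S" using B unfolding comps_def' by (auto elim: quotientE)
  let ?R = "\<lambda>S C u v. u \<in> S \<and> v \<in> S \<and> cg_adj \<sigma> C u v"
  have xS: "x \<in> S" using x BS by blast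
  have main: "y \<in> B \<and> (?R B C')\<^sup>*\<^sup>* x y" if "(?R S C')\<^sup>*\<^sup>* x y" for y
    using that
  proof (induction rule: rtranclp_induct)
    case base then show ?case using x by simp
  next
    case (step y z)
    then have yB: "y \<in> B" and yz: "y \<in> S" "z \<in> S" "cg_adj \<sigma> C' y z" and ih: "(?R B C')\<^sup>*\<^sup>* x y" by auto
    have "(b, y) \<in> crel \<sigma> C S" using yB b by simp
    then have "(?R S C)\<^sup>*\<^sup>* b y" unfolding crel_def by simp
    moreover have "?R S C y z" using yz adj_mono[OF _ sub] by blast
    ultimately have "(?R S C)\<^sup>*\<^sup>* b z" by (rule rtranclp.rtrancl_into_rtrancl)
    then have "(b, z) \<in> crel \<sigma> C S" unfolding crel_def using b yz by simp
    then have zB: "z \<in> B" using b by simp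
    have "?R B C' y z" using yB zB yz by blast
    then have "(?R B C')\<^sup>*\<^sup>* x z" using ih by (rule rtranclp.rtrancl_into_rtrancl[rotated])
    then show ?case using zB by simp
  qed
  show ?thesis
  proof
    show "crel \<sigma> C' S `` {x} \<subseteq> crel \<sigma> C' B `` {x}"
      using main x unfolding crel_def by auto
  next
    have mono: "(?R B C')\<^sup>*\<^sup>* x y \<Longrightarrow> (?R S C')\<^sup>*\<^sup>* x y" for y
      by (rule rtranclp_mono[THEN predicate2D, rotated]) (use BS in auto)
    show "crel \<sigma> C' B `` {x} \<subseteq> crel \<sigma> C' S `` {x}"
      using mono BS xS unfolding crel_def by auto
  qed
qed

lemma comps_union:
  assumes sub: "C' \<subseteq> C" and fin: "finite S"
  shows "cg_comps \<sigma> C' S = (\<Union>B\<in>cg_comps \<sigma> C S. cg_comps \<sigma> C' B)"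
proof -
  have "cg_comps \<sigma> C' S = (\<Union>x\<in>S. {crel \<sigma> C' S `` {x}})" unfolding comps_def' quotient_def ..
  also have "\<dots> = (\<Union>B\<in>cg_comps \<sigma> C S. \<Union>x\<in>B. {crel \<sigma> C' S `` {x}})"
    using comps_facts(5)[OF fin, of \<sigma> C] by blast
  also have "\<dots> = (\<Union>B\<in>cg_comps \<sigma> C S. \<Union>x\<in>B. {crel \<sigma> C' B `` {x}})"
    using class_eq[OF sub] by (intro SUP_cong refl) simp
  also have "\<dots> = (\<Union>B\<in>cg_comps \<sigma> C S. cg_comps \<sigma> C' B)"
    unfolding comps_def' quotient_def ..
  finally show ?thesis .
qed

lemma card_comps_sum:
  assumes sub: "C' \<subseteq> C" and fin: "finite S"
  shows "card (cg_comps \<sigma> C' S) = (\<Sum>B\<in>cg_comps \<sigma> C S. card (cg_comps \<sigma> C' B))"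
proof -
  have f: "finite (cg_comps \<sigma> C S)" using comps_facts(1)[OF fin] .
  have fB: "finite (cg_comps \<sigma> C' B)" if "B \<in> cg_comps \<sigma> C S" for B
    using comps_facts(1) comps_facts(4)[OF fin that] by blast
  have disj: "cg_comps \<sigma> C' A \<inter> cg_comps \<sigma> C' B = {}"
    if AB: "A \<in> cg_comps \<sigma> C S" "B \<in> cg_comps \<sigma> C S" "A \<noteq> B" for A B
  proof (rule ccontr)
    assume "cg_comps \<sigma> C' A \<inter> cg_comps \<sigma> C' B \<noteq> {}"
    then obtain X where X: "X \<in> cg_comps \<sigma> C' A" "X \<in> cg_comps \<sigma> C' B" by blast
    have finA: "finite A" "finite B" using comps_facts(4)[OF fin] AB by auto
    have "X \<subseteq> A" "X \<subseteq> B" "X \<noteq> {}" using comps_facts(2,3)[OF finA(1)] comps_facts(2)[OF finA(2)] X by auto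
    then show False using comps_facts(6)[OF fin AB] by blast
  qed
  show ?thesis unfolding comps_union[OF sub fin]
    by (rule card_UN_disjoint[OF f]) (use fB disj in auto)
qed

lemma card_lines:
  assumes "finite C" "finite S"
  shows "card (cg_lines C S) = card C * card (S \<inter> range Inl)"
proof -
  have l: "cg_lines C S = C \<times> (Inl -` S)" unfolding cg_lines_def by auto
  have "bij_betw Inl (Inl -` S) (S \<inter> range Inl)" unfolding bij_betw_def by (auto simp: inj_on_def)
  then have "card (Inl -` S) = card (S \<inter> range Inl)" by (rule bij_betw_same_card)
  then show ?thesis unfolding l by (simp add: card_cartesian_product)
qed

lemma card_Inl_sum:
  assumes "finite S"
  shows "card (S \<inter> range Inl) = (\<Sum>x\<in>S. if x \<in> range Inl then 1 else 0)"
  using sum.inter_restrict[OF assms, of "\<lambda>_. (1::nat)" "range Inl"] by simp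

lemma verts_facts:
  "finite (cg_verts p)" "card (cg_verts p) = 2 * p" "card (cg_verts p \<inter> range Inl) = p"
proof -
  show "finite (cg_verts p)" unfolding cg_verts_def by simp
  have "card (cg_verts p) = card (Inl ` {..<p} :: (nat+nat) set) + card (Inr ` {..<p} :: (nat+nat) set)"
    unfolding cg_verts_def by (rule card_Un_disjoint) auto
  also have "\<dots> = 2 * p" by (simp add: card_image)
  finally show "card (cg_verts p) = 2 * p" .
  have "cg_verts p \<inter> range Inl = Inl ` {..<p}" unfolding cg_verts_def by auto
  then show "card (cg_verts p \<inter> range Inl) = p" by (simp add: card_image)
qed

lemma bubble_sums:
  shows "(\<Sum>B\<in>bubbles D p \<sigma>. card B) = 2 * p"
    "(\<Sum>B\<in>bubbles D p \<sigma>. card (cg_lines {1..D} B)) = D * p"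
    "\<And>c d. c \<in> {1..D} \<Longrightarrow> d \<in> {1..D} \<Longrightarrow>
       (\<Sum>B\<in>bubbles D p \<sigma>. card (cg_comps \<sigma> {c, d} B)) = card (cg_comps \<sigma> {c, d} (cg_verts p))"
proof -
  have fin: "finite (cg_verts p)" by (rule verts_facts)
  note bf = comps_facts[OF fin, where \<sigma>=\<sigma> and C="{1..D}", folded bubbles_def]
  show "(\<Sum>B\<in>bubbles D p \<sigma>. card B) = 2 * p"
    using sum_partition[OF fin, where \<sigma>=\<sigma> and C="{1..D}" and h="\<lambda>_. 1::nat"] verts_facts(2)
    unfolding bubbles_def by simp
  have "(\<Sum>B\<in>bubbles D p \<sigma>. card (cg_lines {1..D} B)) = (\<Sum>B\<in>bubbles D p \<sigma>. D * card (B \<inter> range Inl))"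
    using card_lines bf(4) by (intro sum.cong) auto
  also have "\<dots> = (\<Sum>B\<in>bubbles D p \<sigma>. D * (\<Sum>x\<in>B. if x \<in> range Inl then 1 else 0))"
    using card_Inl_sum bf(4) by (intro sum.cong) auto
  also have "\<dots> = D * (\<Sum>B\<in>bubbles D p \<sigma>. \<Sum>x\<in>B. if x \<in> range Inl then 1 else 0)"
    by (rule sum_distrib_left[symmetric])
  also have "\<dots> = D * card (cg_verts p \<inter> range Inl)"
    using sum_partition[OF fin, where \<sigma>=\<sigma> and C="{1..D}" and h="\<lambda>x. if x \<in> range Inl then 1 else (0::nat)"]
      card_Inl_sum[OF fin] unfolding bubbles_def by simp
  finally show "(\<Sum>B\<in>bubbles D p \<sigma>. card (cg_lines {1..D} B)) = D * p" using verts_facts(3) by simp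
  show "\<And>c d. c \<in> {1..D} \<Longrightarrow> d \<in> {1..D} \<Longrightarrow>
       (\<Sum>B\<in>bubbles D p \<sigma>. card (cg_comps \<sigma> {c, d} B)) = card (cg_comps \<sigma> {c, d} (cg_verts p))"
  proof -
    fix c d assume "c \<in> {1..D}" "d \<in> {1..D}"
    then have "{c, d} \<subseteq> {1..D}" by auto
    from card_comps_sum[OF this fin, of \<sigma>]
    show "(\<Sum>B\<in>bubbles D p \<sigma>. card (cg_comps \<sigma> {c, d} B)) = card (cg_comps \<sigma> {c, d} (cg_verts p))"
      unfolding bubbles_def by simp
  qed
qed




lemma Phi_insert0:
  assumes "0 \<notin> A" "finite A"
  shows "Phi \<sigma> (insert 0 A) S = Phi \<sigma> A S + 2 * (\<Sum>i\<in>A. real (card (cg_comps \<sigma> {0, i} S)))"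
proof -
  let ?F = "\<lambda>e. real (card (cg_comps \<sigma> e S))"
  have g0: "(\<Sum>d\<in>insert 0 A - {0}. ?F {0, d}) = (\<Sum>i\<in>A. ?F {0, i})"
    using assms by simp
  have gc: "(\<Sum>d\<in>insert 0 A - {c}. ?F {c, d}) = ?F {0, c} + (\<Sum>d\<in>A - {c}. ?F {c, d})" if "c \<in> A" for c
  proof -
    have "insert 0 A - {c} = insert 0 (A - {c})" using that assms by auto
    then show ?thesis using assms by (simp add: insert_commute)
  qed
  have "Phi \<sigma> (insert 0 A) S = (\<Sum>i\<in>A. ?F {0, i}) + (\<Sum>c\<in>A. ?F {0, c} + (\<Sum>d\<in>A - {c}. ?F {c, d}))"
    unfolding Phi_def using assms g0 gc by (simp add: sum.insert)
  also have "\<dots> = Phi \<sigma> A S + 2 * (\<Sum>i\<in>A. ?F {0, i})"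
    unfolding Phi_def by (simp add: sum.distrib)
  finally show ?thesis .
qed

lemma Phi_bubbles:
  "(\<Sum>B\<in>bubbles D p \<sigma>. Phi \<sigma> {1..D} B) = Phi \<sigma> {1..D} (cg_verts p)"
proof -
  have "(\<Sum>B\<in>bubbles D p \<sigma>. Phi \<sigma> {1..D} B)
      = (\<Sum>c\<in>{1..D}. \<Sum>d\<in>{1..D} - {c}. \<Sum>B\<in>bubbles D p \<sigma>. real (card (cg_comps \<sigma> {c, d} B)))"
    unfolding Phi_def by (simp add: sum.swap[where A="bubbles D p \<sigma>"])
  also have "\<dots> = Phi \<sigma> {1..D} (cg_verts p)"
    unfolding Phi_def
  proof (intro sum.cong refl)
    fix c d assume "c \<in> {1..D}" "d \<in> {1..D} - {c}"
    then show "(\<Sum>B\<in>bubbles D p \<sigma>. real (card (cg_comps \<sigma> {c, d} B))) = real (card (cg_comps \<sigma> {c, d} (cg_verts p)))"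
      using bubble_sums(3)[where c=c and d=d and D=D and p=p and \<sigma>=\<sigma>] by (simp flip: of_nat_sum)
  qed
  finally show ?thesis .
qed


lemma part1:
  fixes D p :: nat and \<sigma> :: "nat \<Rightarrow> nat \<Rightarrow> nat"
  assumes D3: "D \<ge> 3"
  shows "(real D - 1) * real (card (bubbles D p \<sigma>))
           - 2 / fact (D - 2) * (\<Sum>B\<in>bubbles D p \<sigma>. cg_degree \<sigma> {1..D} B)
           - (real D - 1) * real p
           + real (\<Sum>i=1..D. num_faces \<sigma> (cg_verts p) 0 i)
         = real D - 2 / fact (D - 1) * cg_degree \<sigma> {0..D} (cg_verts p)"
proof -
  let ?V = "cg_verts p" and ?P = "bubbles D p \<sigma>"
  define f1 :: real where "f1 = fact (D - 1)"
  define f2 :: real where "f2 = fact (D - 2)"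
  define Ph1 where "Ph1 = Phi \<sigma> {1..D} ?V"
  define F0 where "F0 = (\<Sum>i=1..D. real (num_faces \<sigma> ?V 0 i))"
  have f2p: "f2 > 0" unfolding f2_def by simp
  have hf1: "f1 = (real D - 1) * f2"
  proof -
    have k: "D = Suc (Suc (D - 2))" using D3 by arith
    show ?thesis unfolding f1_def f2_def by (subst k, subst k) (simp add: algebra_simps)
  qed
  have hf0: "fact D = real D * f1"
  proof -
    obtain k where k: "D = Suc k" using D3 by (cases D) auto
    show ?thesis unfolding f1_def k by simp
  qed
  have c01: "card {0..D} = D + 1" "card {1..D} = D" by simp_all
  have sets: "{0..D} = insert 0 {1..D}" by auto
  have PhiG: "Phi \<sigma> {0..D} ?V = Ph1 + 2 * F0"
    unfolding sets Ph1_def F0_def num_faces_def by (rule Phi_insert0) auto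
  have linesG: "card (cg_lines {0..D} ?V) = (D + 1) * p"
    using card_lines[of "{0..D}" ?V] verts_facts by simp
  have degG: "cg_degree \<sigma> {0..D} ?V = fact D / 4 * (2 - 2 * real p + (real D + 1) * real p)
      - f1 / 4 * (Ph1 + 2 * F0)"
    using degree_formula[of "{0..D}" \<sigma> ?V] D3 c01 linesG verts_facts PhiG
    by (simp add: f1_def algebra_simps)
  have degB: "cg_degree \<sigma> {1..D} B = f1 / 4 * (2 - real (card B) + real (card (cg_lines {1..D} B)))
      - f2 / 4 * Phi \<sigma> {1..D} B" for B
    using degree_formula[of "{1..D}" \<sigma> B] D3 by (simp add: f1_def f2_def)
  have sumB: "(\<Sum>B\<in>?P. cg_degree \<sigma> {1..D} B) =
      f1 / 4 * (2 * real (card ?P) - 2 * real p + real D * real p) - f2 / 4 * Ph1"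
  proof -
    have "(\<Sum>B\<in>?P. cg_degree \<sigma> {1..D} B) = f1 / 4 * (\<Sum>B\<in>?P. 2 - real (card B) + real (card (cg_lines {1..D} B)))
       - f2 / 4 * (\<Sum>B\<in>?P. Phi \<sigma> {1..D} B)"
      unfolding degB by (simp add: sum_subtractf sum_distrib_left)
    also have "(\<Sum>B\<in>?P. 2 - real (card B) + real (card (cg_lines {1..D} B)))
        = 2 * real (card ?P) - real (\<Sum>B\<in>?P. card B) + real (\<Sum>B\<in>?P. card (cg_lines {1..D} B))"
      by (simp add: sum.distrib sum_subtractf)
    also have "\<dots> = 2 * real (card ?P) - 2 * real p + real D * real p"
      using bubble_sums(1,2)[where D=D and p=p and \<sigma>=\<sigma>] by simp
    finally show ?thesis using Phi_bubbles unfolding Ph1_def by simp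
  qed
  have lhsF: "real (\<Sum>i=1..D. num_faces \<sigma> ?V 0 i) = F0" unfolding F0_def by simp
  have f1p: "f1 > 0" unfolding f1_def by simp
  have L: "2 / f2 * (f1 / 4 * (2 * real (card ?P) - 2 * real p + real D * real p) - f2 / 4 * Ph1)
      = (real D - 1) / 2 * (2 * real (card ?P) - 2 * real p + real D * real p) - Ph1 / 2"
    unfolding hf1 using f2p by (simp add: field_simps)
  have R: "2 / f1 * (real D * f1 / 4 * (2 - 2 * real p + (real D + 1) * real p) - f1 / 4 * (Ph1 + 2 * F0))
      = real D / 2 * (2 - 2 * real p + (real D + 1) * real p) - (Ph1 + 2 * F0) / 2"
    using f1p by (simp add: field_simps)
  show ?thesis
    unfolding sumB degG lhsF hf0 f1_def[symmetric] f2_def[symmetric] L R by (simp add: field_simps)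
qed


lemma part2:
  fixes D p :: nat and \<sigma> :: "nat \<Rightarrow> nat \<Rightarrow> nat" and t1 N :: real and tB :: "(nat + nat) set \<Rightarrow> real"
  assumes D3: "D \<ge> 3" and t1: "t1 \<noteq> 0" and N: "N > 0"
  shows "feynman_amplitude D p \<sigma> t1 tB N
          = (\<Prod>B\<in>bubbles D p \<sigma>. tB B) / t1 ^ p
            * N powr ((real D - 1) * real (card (bubbles D p \<sigma>))
           - 2 / fact (D - 2) * (\<Sum>B\<in>bubbles D p \<sigma>. cg_degree \<sigma> {1..D} B)
           - (real D - 1) * real p
           + real (\<Sum>i=1..D. num_faces \<sigma> (cg_verts p) 0 i))"
proof -
  let ?P = "bubbles D p \<sigma>"
  let ?e = "\<lambda>B. real D - 1 - 2 / fact (D - 2) * cg_degree \<sigma> {1..D} B"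
  let ?F = "\<Sum>i=1..D. num_faces \<sigma> (cg_verts p) 0 i"
  have a: "(\<Prod>B\<in>?P. tB B * N powr ?e B) = (\<Prod>B\<in>?P. tB B) * N powr (\<Sum>B\<in>?P. ?e B)"
    using N by (simp add: prod.distrib powr_sum)
  have d: "(\<Sum>B\<in>?P. ?e B) = (real D - 1) * real (card ?P) - 2 / fact (D - 2) * (\<Sum>B\<in>?P. cg_degree \<sigma> {1..D} B)"
  proof -
    have "(\<Sum>B\<in>?P. ?e B) = (\<Sum>B\<in>?P. real D - 1) - (\<Sum>B\<in>?P. 2 / fact (D - 2) * cg_degree \<sigma> {1..D} B)"
      by (rule sum_subtractf)
    also have "(\<Sum>B\<in>?P. 2 / fact (D - 2) * cg_degree \<sigma> {1..D} B) = 2 / fact (D - 2) * (\<Sum>B\<in>?P. cg_degree \<sigma> {1..D} B)"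
      by (rule sum_distrib_left[symmetric])
    finally show ?thesis by simp
  qed
  have rD: "real ((D - 1) * p) = (real D - 1) * real p" using D3 by (simp add: of_nat_diff)
  have b: "(1 / (t1 * N ^ (D - 1))) ^ p = 1 / t1 ^ p * N powr (- ((real D - 1) * real p))"
  proof -
    have "(1 / (t1 * N ^ (D - 1))) ^ p = 1 / t1 ^ p * (1 / N ^ ((D - 1) * p))"
      by (simp add: power_mult_distrib power_mult power_one_over)
    also have "N ^ ((D - 1) * p) = N powr ((real D - 1) * real p)"
      using powr_realpow[OF N, of "(D - 1) * p"] unfolding rD by simp
    finally show ?thesis by (simp add: powr_minus_divide)
  qed
  have c: "N ^ ?F = N powr real ?F" using powr_realpow[OF N, of ?F] by (simp only:)
  have "feynman_amplitude D p \<sigma> t1 tB N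
      = 1 / t1 ^ p * N powr (- ((real D - 1) * real p)) * ((\<Prod>B\<in>?P. tB B) * N powr (\<Sum>B\<in>?P. ?e B)) * N powr real ?F"
    unfolding feynman_amplitude_def b a c ..
  also have "\<dots> = (\<Prod>B\<in>?P. tB B) / t1 ^ p * (N powr (- ((real D - 1) * real p)) * N powr (\<Sum>B\<in>?P. ?e B) * N powr real ?F)"
    by simp
  also have "N powr (- ((real D - 1) * real p)) * N powr (\<Sum>B\<in>?P. ?e B) * N powr real ?F
      = N powr (- ((real D - 1) * real p) + (\<Sum>B\<in>?P. ?e B) + real ?F)"
    by (simp only: powr_add)
  finally show ?thesis unfolding d by (simp add: algebra_simps)
qed



theorem mainTheorem3:
  fixes D p :: nat and \<sigma> :: "nat \<Rightarrow> nat \<Rightarrow> nat"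
  assumes "D \<ge> 3"
    and "closed_colored_graph {0..D} p \<sigma>"
    and "cg_connected {0..D} p \<sigma>"
  shows "(real D - 1) * real (card (bubbles D p \<sigma>))
           - 2 / fact (D - 2) * (\<Sum>B\<in>bubbles D p \<sigma>. cg_degree \<sigma> {1..D} B)
           - (real D - 1) * real p
           + real (\<Sum>i=1..D. num_faces \<sigma> (cg_verts p) 0 i)
         = real D - 2 / fact (D - 1) * cg_degree \<sigma> {0..D} (cg_verts p)
     \<and> (\<forall>(t1::real) (tB::(nat + nat) set \<Rightarrow> real) (N::real). t1 \<noteq> 0 \<longrightarrow> N > 0 \<longrightarrow>
          feynman_amplitude D p \<sigma> t1 tB N
          = (\<Prod>B\<in>bubbles D p \<sigma>. tB B) / t1 ^ p
            * N powr (real D - 2 / fact (D - 1) * cg_degree \<sigma> {0..D} (cg_verts p)))"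
  using part1[OF assms(1), of p \<sigma>] part2[OF assms(1)] by metis

end
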